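(* Let $\Delta$ be a shellable simplicial complex on $[n]$ with $\dim\Delta\le n-3$, with shelling $F_1,\dots,F_q$, and let $F=F_q$ be the last facet. Let $\Delta_F$ be the simplicial complex on $F\cup\{v\}$ ($v$ a new vertex) whose facets are: (A) the sets $F_i\cap F$ maximal among $\{F_i\cap F: F\not\subseteq F_i,\ F_i\cup F\neq[n]\}$, and (B) the sets $(F_i\cap F)\cup\{v\}$ for facets $F_i$ with $F_i\cup F=[n]$. Then $\Delta_F$ is shellable. Moreover, there is a shelling of $\Delta_F$ such that for every facet of type (B), $\widetilde F_i=(F_i\cap F)\cup\{v\}$, one has $\widetilde G_i=G_i\cap F$, where $\widetilde G_i$ is computed in $\Delta_F$ with respect to this shelling and $G_i$ in $\Delta$ with respect to $F_1,\dots,F_q$.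
   Context: A shelling is an ordering $F_1,\dots,F_q$ of all facets such that for each $k\ge2$, $(\bigcup_{i<k}2^{F_i})\cap2^{F_k}$ is pure of dimension $\dim F_k-1$; a complex is shellable if it has one. A wall of a facet is a codimension-one face of it. For a shelling $F_1,\dots,F_q$, set $G_1=F_1$ and for $i\ge2$ let $G_i$ be the intersection of all walls of $F_i$ lying in the subcomplex generated by $F_1,\dots,F_{i-1}$. *)

theory Defs
  imports Main
begin

definition simplicial_complex :: "'a set \<Rightarrow> 'a set set \<Rightarrow> bool" where
  "simplicial_complex V K \<longleftrightarrow>
     (\<forall>F\<in>K. finite F \<and> F \<subseteq> V) \<and> (\<forall>F\<in>K. \<forall>G. G \<subseteq> F \<longrightarrow> G \<in> K)"

definition maximal_sets :: "'a set set \<Rightarrow> 'a set set" where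
  "maximal_sets S = {X \<in> S. \<forall>Y\<in>S. X \<subseteq> Y \<longrightarrow> Y = X}"

definition facets :: "'a set set \<Rightarrow> 'a set set" where
  "facets K = maximal_sets K"

definition pure_of_dim :: "int \<Rightarrow> 'a set set \<Rightarrow> bool" where
  "pure_of_dim d K \<longleftrightarrow> (\<forall>F\<in>facets K. int (card F) - 1 = d)"

definition gen_complex :: "'a set set \<Rightarrow> 'a set set" where
  "gen_complex S = {G. \<exists>F\<in>S. G \<subseteq> F}"

text \<open>A shelling (0-based list indices): for every k \<ge> 1 (paper: k \<ge> 2), the complex
  (\<Union>i<k. 2^{F_i}) \<inter> 2^{F_k} is pure of dimension dim F_k - 1.\<close>
definition is_shelling :: "'a set set \<Rightarrow> 'a set list \<Rightarrow> bool" where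
  "is_shelling K Fs \<longleftrightarrow> distinct Fs \<and> set Fs = facets K \<and>
     (\<forall>k. 0 < k \<and> k < length Fs \<longrightarrow>
        pure_of_dim ((int (card (Fs ! k)) - 1) - 1)
          ((\<Union>i<k. Pow (Fs ! i)) \<inter> Pow (Fs ! k)))"

definition shellable :: "'a set set \<Rightarrow> bool" where
  "shellable K \<longleftrightarrow> (\<exists>Fs. is_shelling K Fs)"

text \<open>G_k for a shelling (0-based): G_0 = F_0; for k \<ge> 1 the intersection of all walls
  (codimension-one faces) of F_k lying in the subcomplex generated by F_0,...,F_{k-1}
  (intersection taken inside F_k).\<close>
definition shell_G :: "'a set list \<Rightarrow> nat \<Rightarrow> 'a set" where
  "shell_G Fs k = (if k = 0 then Fs ! 0 else
     {x \<in> Fs ! k. \<forall>W. W \<subseteq> Fs ! k \<and> card W + 1 = card (Fs ! k) \<and>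
                        (\<exists>j<k. W \<subseteq> Fs ! j) \<longrightarrow> x \<in> W})"

end

theory Submission
  imports Defs
begin

lemma shell_wall:
  assumes sh: "is_shelling K Fs" and k: "0<k" "k<length Fs" and fin: "finite (Fs!k)"
    and Y: "Y \<subseteq> Fs!k" "l<k" "Y \<subseteq> Fs!l"
  shows "\<exists>W. Y \<subseteq> W \<and> W \<subseteq> Fs!k \<and> card W + 1 = card (Fs!k) \<and> (\<exists>j<k. W \<subseteq> Fs!j)"
proof -
  define C where "C = (\<Union>i<k. Pow (Fs!i)) \<inter> Pow (Fs!k)"
  have pure: "pure_of_dim ((int (card (Fs ! k)) - 1) - 1) C" using sh k unfolding is_shelling_def C_def by blast
  have finC: "finite C" using fin unfolding C_def by (meson finite_Int finite_Pow_iff)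
  have YC: "Y \<in> C" using Y unfolding C_def by blast
  from finite_has_maximal2[OF finC YC] obtain Z where Z: "Z \<in> C" "Y \<subseteq> Z" "\<forall>b\<in>C. Z \<subseteq> b \<longrightarrow> Z = b"
    by (elim bexE conjE) (rule that)
  have "Z \<in> facets C" using Z unfolding facets_def maximal_sets_def by auto
  hence "int (card Z) - 1 = (int (card (Fs ! k)) - 1) - 1" using pure unfolding pure_of_dim_def by blast
  hence "card Z + 1 = card (Fs!k)" by linarith
  thus ?thesis using Z unfolding C_def by blast
qed

lemma pure_intro:
  assumes cov: "\<forall>Y\<in>C. \<exists>Z\<in>C. Y \<subseteq> Z \<and> card Z + 1 = card X"
  shows "pure_of_dim ((int (card X) - 1) - 1) C"
  unfolding pure_of_dim_def facets_def maximal_sets_def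
proof (intro ballI)
  fix Y assume "Y \<in> {Xa \<in> C. \<forall>Ya\<in>C. Xa \<subseteq> Ya \<longrightarrow> Ya = Xa}"
  then have Y: "Y\<in>C" "\<forall>Ya\<in>C. Y \<subseteq> Ya \<longrightarrow> Ya = Y" by auto
  obtain Z where "Z\<in>C" "Y \<subseteq> Z" "card Z + 1 = card X" using cov Y by blast
  then have "card Y + 1 = card X" using Y by auto
  thus "int (card Y) - 1 = int (card X) - 1 - 1" by linarith
qed

lemma wall_form:
  assumes "finite X" "W \<subseteq> X" "card W + 1 = card X" shows "\<exists>z\<in>X. W = X - {z}"
proof -
  have "W \<noteq> X" using assms by auto
  then obtain z where z: "z \<in> X" "z \<notin> W" using assms(2) by blast
  have "W \<subseteq> X - {z}" using z assms by blast
  moreover have "card (X - {z}) = card W" using z assms by simp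
  ultimately have "W = X - {z}" using card_subset_eq[of "X-{z}" W] assms(1) by auto
  thus ?thesis using z by blast
qed

lemma facets_gen:
  assumes "\<forall>X\<in>S. \<forall>Y\<in>S. X \<subseteq> Y \<longrightarrow> X = Y" shows "facets (gen_complex S) = S"
proof
  show "facets (gen_complex S) \<subseteq> S"
  proof
    fix X assume "X \<in> facets (gen_complex S)"
    then have X: "X \<in> gen_complex S" "\<forall>Y\<in>gen_complex S. X \<subseteq> Y \<longrightarrow> Y = X"
      unfolding facets_def maximal_sets_def by auto
    then obtain F where F: "F \<in> S" "X \<subseteq> F" unfolding gen_complex_def by auto
    then have "F \<in> gen_complex S" unfolding gen_complex_def by auto
    then have "F = X" using X(2) F(2) by simp
    then show "X \<in> S" using F(1) by simp
  qed
  show "S \<subseteq> facets (gen_complex S)"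
  proof
    fix X assume X: "X \<in> S"
    have "\<forall>Y\<in>gen_complex S. X \<subseteq> Y \<longrightarrow> Y = X"
    proof (intro ballI impI)
      fix Y assume "Y \<in> gen_complex S" "X \<subseteq> Y"
      then obtain F where "F \<in> S" "Y \<subseteq> F" unfolding gen_complex_def by auto
      then have "X \<subseteq> F" using \<open>X \<subseteq> Y\<close> by (rule_tac subset_trans) auto
      then have "X = F" using assms X \<open>F \<in> S\<close> by simp
      then show "Y = X" using \<open>X \<subseteq> Y\<close> \<open>Y \<subseteq> F\<close> by simp
    qed
    moreover have "X \<in> gen_complex S" using X unfolding gen_complex_def by auto
    ultimately show "X \<in> facets (gen_complex S)" unfolding facets_def maximal_sets_def by auto
  qed
qed

lemma sorted_idx:
  assumes "sorted_wrt (<) bs" "m < length bs" "l \<in> set bs" "l < bs!m"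
  shows "\<exists>m'<m. bs!m' = (l::nat)"
proof -
  obtain m' where m': "m' < length bs" "bs!m' = l" using assms(3) by (auto simp: in_set_conv_nth)
  have "m' < m"
  proof (rule ccontr)
    assume "\<not> m' < m"
    then have "m = m' \<or> m < m'" by auto
    then show False using sorted_wrt_nth_less[OF assms(1), of m m'] m' assms(4) by auto
  qed
  thus ?thesis using m' by blast
qed

lemma card_wall_v:
  assumes "finite S" "x \<in> S" "v \<notin> S"
  shows "card ((S - {x}) \<union> {v}) + 1 = card (S \<union> {v})"
proof -
  have "card S > 0" using assms card_gt_0_iff by blast
  moreover have "card ((S - {x}) \<union> {v}) = card (S - {x}) + 1" using assms by simp
  moreover have "card (S \<union> {v}) = card S + 1" using assms by simp
  moreover have "card (S - {x}) = card S - 1" using assms by simp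
  ultimately show ?thesis by linarith
qed

theorem lemma4p8:
  fixes K :: "nat set set" and n v :: nat and Fs :: "nat set list"
    and F :: "nat set" and q :: nat and A B KF :: "nat set set"
  assumes cplx: "simplicial_complex {1..n} K"
    and dim: "\<forall>X\<in>K. int (card X) - 1 \<le> int n - 3"
    and shell: "is_shelling K Fs"
    and v: "v \<notin> {1..n}"
  defines "q \<equiv> length Fs"
    and "F \<equiv> last Fs"
    and "A \<equiv> maximal_sets {Fs ! i \<inter> F | i. i < q \<and> \<not> F \<subseteq> Fs ! i \<and> Fs ! i \<union> F \<noteq> {1..n}}"
    and "B \<equiv> {(Fs ! i \<inter> F) \<union> {v} | i. i < q \<and> Fs ! i \<union> F = {1..n}}"
    and "KF \<equiv> gen_complex (A \<union> B)"
  shows "simplicial_complex (F \<union> {v}) KF \<and> shellable KF \<and>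
    (\<exists>L. is_shelling KF L \<and>
       (\<forall>i<q. Fs ! i \<union> F = {1..n} \<longrightarrow>
          (\<exists>j<length L. L ! j = (Fs ! i \<inter> F) \<union> {v} \<and>
                        shell_G L j = shell_G Fs i \<inter> F)))"
proof -
  have facK: "\<And>i. i<q \<Longrightarrow> Fs!i \<in> facets K"
    using shell nth_mem unfolding is_shelling_def q_def by blast
  have dist: "distinct Fs" using shell unfolding is_shelling_def by blast
  have hK: "\<And>i. i<q \<Longrightarrow> finite (Fs!i) \<and> Fs!i \<subseteq> {1..n} \<and> card (Fs!i) + 2 \<le> n"
  proof -
    fix i assume "i<q"
    then have "Fs!i \<in> K" using facK unfolding facets_def maximal_sets_def by blast
    then show "finite (Fs!i) \<and> Fs!i \<subseteq> {1..n} \<and> card (Fs!i) + 2 \<le> n"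
    proof -
      have "finite (Fs!i) \<and> Fs!i \<subseteq> {1..n}" using cplx \<open>Fs!i \<in> K\<close> unfolding simplicial_complex_def by blast
      moreover have "int (card (Fs!i)) - 1 \<le> int n - 3" using dim \<open>Fs!i \<in> K\<close> by blast
      ultimately show ?thesis by linarith
    qed
  qed
  have anti: "\<And>i j. i<q \<Longrightarrow> j<q \<Longrightarrow> Fs!i \<subseteq> Fs!j \<Longrightarrow> i = j"
  proof -
    fix i j assume ij: "i<q" "j<q" "Fs!i \<subseteq> Fs!j"
    have "Fs!j \<in> K" using facK[OF ij(2)] unfolding facets_def maximal_sets_def by blast
    then have "Fs!j = Fs!i" using facK[OF ij(1)] ij(3) unfolding facets_def maximal_sets_def by blast
    then show "i = j" using dist ij nth_eq_iff_index_eq unfolding q_def by blast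
  qed
  show ?thesis
  proof (cases "q = 0")
    case True
    then have "A = {}" "B = {}" unfolding A_def B_def maximal_sets_def by auto
    then have KF: "KF = {}" unfolding KF_def gen_complex_def by auto
    have "is_shelling KF []" unfolding is_shelling_def KF facets_def maximal_sets_def by auto
    then show ?thesis using True unfolding simplicial_complex_def shellable_def KF by auto
  next
    case False
    define p where "p = q - 1"
    have p: "p < q" "q = Suc p" using False unfolding p_def by auto
    have Fp: "F = Fs!p" unfolding F_def p_def q_def using False last_conv_nth[of Fs] q_def by auto
    have finF: "finite F" "F \<subseteq> {1..n}" "card F + 2 \<le> n" using hK[OF p(1)] Fp by auto
    have Fn: "F \<noteq> {1..n}" using finF by auto
    have vF: "v \<notin> F" using v finF by auto
    define P where "P i \<longleftrightarrow> Fs!i \<union> F = {1..n}" for i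
    have Pchar: "\<And>i. i<q \<Longrightarrow> P i \<longleftrightarrow> {1..n} - F \<subseteq> Fs!i"
      unfolding P_def using hK finF by blast
    have Pp: "\<not> P p" using Fn unfolding P_def Fp by auto
    have Plt: "\<And>i. i<q \<Longrightarrow> P i \<Longrightarrow> i < p" using Pp p by (metis less_Suc_eq)
    have cardc: "\<And>x j. j<q \<Longrightarrow> x \<in> F \<Longrightarrow> {1..n} - {x} \<subseteq> Fs!j \<Longrightarrow> False"
    proof -
      fix x j assume a: "j<q" "x \<in> F" "{1..n} - {x} \<subseteq> Fs!j"
      have "card ({1..n} - {x}) \<le> card (Fs!j)" using card_mono a hK by blast
      moreover have "card ({1..n} - {x}) = n - 1" using a finF by auto
      ultimately show False using hK[OF a(1)] by linarith
    qed
    define R where "R = {x\<in>F. \<exists>j<p. F - {x} \<subseteq> Fs!j}"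
    have wallA: "\<And>i. i<p \<Longrightarrow> \<exists>x\<in>R. Fs!i \<inter> F \<subseteq> F - {x}"
    proof -
      fix i assume i: "i<p"
      have p0: "0<p" using i by auto
      obtain W where W: "Fs!i \<inter> F \<subseteq> W" "W \<subseteq> Fs!p" "card W + 1 = card (Fs!p)" "\<exists>j<p. W \<subseteq> Fs!j"
        using shell_wall[OF shell p0 _ _ _ i, of "Fs!i \<inter> F"] p finF Fp q_def by auto
      obtain z where z: "z \<in> F" "W = F - {z}" using wall_form[of F W] finF W Fp by auto
      then show "\<exists>x\<in>R. Fs!i \<inter> F \<subseteq> F - {x}" using W unfolding R_def by auto
    qed
    define SA where "SA = {Fs ! i \<inter> F | i. i < q \<and> \<not> F \<subseteq> Fs ! i \<and> Fs ! i \<union> F \<noteq> {1..n}}"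
    have ASA: "A = maximal_sets SA" unfolding A_def SA_def by simp
    have RinSA: "\<And>x. x\<in>R \<Longrightarrow> F - {x} \<in> SA"
    proof -
      fix x assume "x \<in> R"
      then obtain j where j: "j<p" "F - {x} \<subseteq> Fs!j" "x \<in> F" unfolding R_def by auto
      have jq: "j < q" using j p by auto
      have nF: "\<not> F \<subseteq> Fs!j" using anti[OF p(1) jq] j Fp by auto
      then have eq: "Fs!j \<inter> F = F - {x}" using j by auto
      have "Fs!j \<union> F \<noteq> {1..n}"
      proof
        assume "Fs!j \<union> F = {1..n}"
        then have "{1..n} - {x} \<subseteq> Fs!j" using j by auto
        then show False using cardc jq j by blast
      qed
      then show "F - {x} \<in> SA" unfolding SA_def using eq jq nF by blast
    qed
    have SAsub: "\<And>Y. Y\<in>SA \<Longrightarrow> (\<exists>x\<in>R. Y \<subseteq> F - {x}) \<and> Y \<subseteq> F \<and> Y \<noteq> F"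
    proof -
      fix Y assume "Y \<in> SA"
      then obtain i where i: "i<q" "\<not> F \<subseteq> Fs!i" "Y = Fs!i \<inter> F" unfolding SA_def by auto
      have "i \<noteq> p" using i Fp by auto
      then have "i < p" using i p by auto
      then show "(\<exists>x\<in>R. Y \<subseteq> F - {x}) \<and> Y \<subseteq> F \<and> Y \<noteq> F" using wallA i by auto
    qed
    have Achar: "A = (\<lambda>x. F - {x}) ` R"
    proof
      show "A \<subseteq> (\<lambda>x. F - {x}) ` R"
      proof
        fix X assume "X \<in> A"
        then have X: "X \<in> SA" "\<forall>Y\<in>SA. X \<subseteq> Y \<longrightarrow> Y = X" unfolding ASA maximal_sets_def by auto
        then obtain x where "x\<in>R" "X \<subseteq> F - {x}" using SAsub by blast
        then show "X \<in> (\<lambda>x. F - {x}) ` R" using X RinSA by auto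
      qed
      show "(\<lambda>x. F - {x}) ` R \<subseteq> A"
      proof
        fix X assume "X \<in> (\<lambda>x. F - {x}) ` R"
        then obtain x where x: "x \<in> R" "X = F - {x}" by auto
        have "\<forall>Y\<in>SA. X \<subseteq> Y \<longrightarrow> Y = X"
        proof (intro ballI impI)
          fix Y assume Y: "Y \<in> SA" "X \<subseteq> Y"
          have "Y \<subseteq> F" "Y \<noteq> F" using SAsub Y by auto
          then show "Y = X" using x Y by auto
        qed
        then show "X \<in> A" unfolding ASA maximal_sets_def using RinSA x by auto
      qed
    qed
    have Bchar: "B = (\<lambda>i. (Fs!i \<inter> F) \<union> {v}) ` {i. i<q \<and> P i}" unfolding B_def P_def by auto
    have finR: "finite R" using finF unfolding R_def by auto
    obtain xs where xs: "set xs = R" "distinct xs" using finite_distinct_list[OF finR] by blast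
    define bs where "bs = filter P [0..<q]"
    have bs: "set bs = {i. i<q \<and> P i}" "sorted_wrt (<) bs" "distinct bs"
      unfolding bs_def by (auto intro: sorted_wrt_filter)
    define As where "As = map (\<lambda>x. F - {x}) xs"
    define Bs where "Bs = map (\<lambda>i. (Fs!i \<inter> F) \<union> {v}) bs"
    define L where "L = As @ Bs"
    have setL: "set L = A \<union> B" unfolding L_def As_def Bs_def Achar Bchar using xs bs by auto
    have injB: "\<And>i j. i<q \<Longrightarrow> j<q \<Longrightarrow> P i \<Longrightarrow> P j \<Longrightarrow> Fs!i \<inter> F \<subseteq> Fs!j \<inter> F \<Longrightarrow> i = j"
    proof -
      fix i j assume a: "i<q" "j<q" "P i" "P j" "Fs!i \<inter> F \<subseteq> Fs!j \<inter> F"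
      have "Fs!i \<subseteq> Fs!j" using a Pchar hK by blast
      then show "i = j" using anti a by blast
    qed
    have BnotA: "\<And>i x. i<q \<Longrightarrow> P i \<Longrightarrow> x \<in> R \<Longrightarrow> \<not> (F - {x} \<subseteq> Fs!i \<inter> F)"
    proof
      fix i x assume a: "i<q" "P i" "x \<in> R" "F - {x} \<subseteq> Fs!i \<inter> F"
      have "{1..n} - {x} \<subseteq> Fs!i" using a Pchar by blast
      then show False using cardc a unfolding R_def by blast
    qed
    have antiAB: "\<forall>X\<in>A\<union>B. \<forall>Y\<in>A\<union>B. X \<subseteq> Y \<longrightarrow> X = Y"
    proof (intro ballI impI)
      fix X Y assume X: "X \<in> A \<union> B" and Y: "Y \<in> A \<union> B" and XY: "X \<subseteq> Y"
      show "X = Y"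
      proof (cases "X \<in> A")
        case XA: True
        then obtain x where x: "x \<in> R" "X = F - {x}" using Achar by auto
        show ?thesis
        proof (cases "Y \<in> A")
          case True
          then obtain y where y: "y \<in> R" "Y = F - {y}" using Achar by auto
          then show ?thesis using x XY unfolding R_def by auto
        next
          case False
          then obtain i where i: "i<q" "P i" "Y = (Fs!i \<inter> F) \<union> {v}" using Y Bchar by auto
          then have "F - {x} \<subseteq> Fs!i \<inter> F" using XY x vF by auto
          then show ?thesis using BnotA i x by blast
        qed
      next
        case False
        then obtain i where i: "i<q" "P i" "X = (Fs!i \<inter> F) \<union> {v}" using X Bchar by auto
        show ?thesis
        proof (cases "Y \<in> A")
          case True
          then obtain y where y: "y \<in> R" "Y = F - {y}" using Achar by auto
          then show ?thesis using XY i vF by auto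
        next
          case False
          then obtain j where j: "j<q" "P j" "Y = (Fs!j \<inter> F) \<union> {v}" using Y Bchar by auto
          have "Fs!i \<inter> F \<subseteq> Fs!j \<inter> F" using XY i j vF by auto
          then show ?thesis using injB i j by auto
        qed
      qed
    qed
    have facKF: "facets KF = A \<union> B" unfolding KF_def using facets_gen antiAB by blast
    have distL: "distinct L"
    proof -
      have "distinct As" unfolding As_def using xs unfolding R_def
        by (auto simp: distinct_map inj_on_def)
      moreover have "distinct Bs"
      proof -
        have "inj_on (\<lambda>i. (Fs!i \<inter> F) \<union> {v}) (set bs)"
        proof (rule inj_onI)
          fix a b assume ab: "a \<in> set bs" "b \<in> set bs" "(Fs!a \<inter> F) \<union> {v} = (Fs!b \<inter> F) \<union> {v}"
          then have "Fs!a \<inter> F \<subseteq> Fs!b \<inter> F" using vF by blast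
          then show "a = b" using injB ab(1,2) bs(1) by blast
        qed
        then show ?thesis unfolding Bs_def using bs(3) by (simp add: distinct_map)
      qed
      moreover have "set As \<inter> set Bs = {}" unfolding As_def Bs_def using vF by auto
      ultimately show ?thesis unfolding L_def by auto
    qed
    have cplxKF: "simplicial_complex (F \<union> {v}) KF"
    proof -
      have "\<forall>X\<in>A \<union> B. X \<subseteq> F \<union> {v}" using Achar Bchar by auto
      then have "\<forall>X\<in>KF. X \<subseteq> F \<union> {v}" unfolding KF_def gen_complex_def by blast
      moreover have "finite (F \<union> {v})" using finF by auto
      ultimately have h1: "\<forall>X\<in>KF. finite X \<and> X \<subseteq> F \<union> {v}" using finite_subset by blast
      have h2: "\<forall>X\<in>KF. \<forall>G. G \<subseteq> X \<longrightarrow> G \<in> KF" unfolding KF_def gen_complex_def by blast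
      show ?thesis unfolding simplicial_complex_def using h1 h2 by blast
    qed
    have lenL: "length L = length As + length Bs" unfolding L_def by simp
    have LA: "\<And>l. l < length As \<Longrightarrow> L!l = F - {xs!l}" unfolding L_def As_def by (simp add: nth_append)
    have LB: "\<And>m. m < length bs \<Longrightarrow> L!(length As + m) = (Fs!(bs!m) \<inter> F) \<union> {v}"
      unfolding L_def Bs_def by (simp add: nth_append)
    have lenB: "length Bs = length bs" unfolding Bs_def by simp
    have bsP: "\<And>m. m < length bs \<Longrightarrow> bs!m < q \<and> P (bs!m)" using bs nth_mem by blast
    have Ain: "\<And>x. x \<in> R \<Longrightarrow> \<exists>l<length As. L!l = F - {x}"
    proof -
      fix x assume "x \<in> R"
      then obtain l where l: "l < length xs" "xs!l = x" using xs(1) by (auto simp: in_set_conv_nth)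
      have "length As = length xs" unfolding As_def by simp
      then show "\<exists>l<length As. L!l = F - {x}" using l LA by auto
    qed
    have Bin: "\<And>m i. m < length bs \<Longrightarrow> i < q \<Longrightarrow> P i \<Longrightarrow> i < bs!m \<Longrightarrow>
                 \<exists>m'<m. L!(length As + m') = (Fs!i \<inter> F) \<union> {v}"
    proof -
      fix m i assume a: "m < length bs" "i < q" "P i" "i < bs!m"
      obtain m' where "m' < m" "bs!m' = i" using sorted_idx[OF bs(2) a(1), of i] a bs by auto
      then show "\<exists>m'<m. L!(length As + m') = (Fs!i \<inter> F) \<union> {v}" using LB a by auto
    qed
    have pureL: "\<And>k. 0 < k \<Longrightarrow> k < length L \<Longrightarrow>
        pure_of_dim ((int (card (L ! k)) - 1) - 1) ((\<Union>i<k. Pow (L ! i)) \<inter> Pow (L ! k))"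
    proof -
      fix k assume k: "0 < k" "k < length L"
      show "pure_of_dim ((int (card (L ! k)) - 1) - 1) ((\<Union>i<k. Pow (L ! i)) \<inter> Pow (L ! k))"
      proof (rule pure_intro, intro ballI)
        fix Y assume "Y \<in> (\<Union>i<k. Pow (L ! i)) \<inter> Pow (L ! k)"
        then obtain l where l: "l < k" "Y \<subseteq> L!l" "Y \<subseteq> L!k" by auto
        show "\<exists>Z\<in>(\<Union>i<k. Pow (L ! i)) \<inter> Pow (L ! k). Y \<subseteq> Z \<and> card Z + 1 = card (L!k)"
        proof (cases "k < length As")
          case True
          have lA: "l < length As" using l True by auto
          have xk: "xs!k \<in> F" "xs!l \<in> F" "xs!k \<noteq> xs!l"
          proof -
            have kl: "k < length xs" "l < length xs" using True lA unfolding As_def by auto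
            have "set xs \<subseteq> F" using xs(1) unfolding R_def by auto
            then have "xs!k \<in> F" "xs!l \<in> F" using kl nth_mem by blast+
            moreover have "xs!k \<noteq> xs!l" using nth_eq_iff_index_eq[OF xs(2) kl] l(1) by simp
            ultimately show "xs!k \<in> F" "xs!l \<in> F" "xs!k \<noteq> xs!l" by auto
          qed
          define Z where "Z = F - {xs!k} - {xs!l}"
          have "Z \<in> (\<Union>i<k. Pow (L ! i)) \<inter> Pow (L ! k)" using LA True lA l unfolding Z_def by auto
          moreover have "Y \<subseteq> Z" using l LA True lA unfolding Z_def by auto
          moreover have "card Z + 1 = card (L!k)"
          proof -
            have "card {xs!k, xs!l} \<le> card F" using xk finF by (intro card_mono) auto
            then have "2 \<le> card F" using xk by simp
            then show ?thesis using LA[OF True] xk finF unfolding Z_def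
              by (simp add: card_Diff_singleton_if)
          qed
          ultimately show ?thesis by blast
        next
          case False
          define m where "m = k - length As"
          have m: "m < length bs" "k = length As + m" using False k lenL lenB unfolding m_def by auto
          define i where "i = bs!m"
          have i: "i < q" "P i" using bsP m unfolding i_def by auto
          have Lk: "L!k = (Fs!i \<inter> F) \<union> {v}" using LB m unfolding i_def by auto
          have finI: "finite (Fs!i \<inter> F)" using finF by auto
          show ?thesis
          proof (cases "l < length As")
            case True
            have ip: "i < p" using Plt[OF i(1) i(2)] .
            obtain x where x: "x \<in> R" "Fs!i \<inter> F \<subseteq> F - {x}" using wallA[OF ip] by (elim bexE) (rule that)
            obtain l' where l': "l' < length As" "L!l' = F - {x}" using Ain[OF x(1)] by auto
            define Z where "Z = Fs!i \<inter> F"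
            have "l' < k" "Z \<subseteq> L!l'" using l' x m unfolding Z_def by auto
            then have "Z \<in> (\<Union>i<k. Pow (L ! i)) \<inter> Pow (L ! k)" using Lk unfolding Z_def by blast
            moreover have "Y \<subseteq> Z" using l LA True Lk vF unfolding Z_def by auto
            moreover have "card Z + 1 = card (L!k)" using Lk finI vF unfolding Z_def by auto
            ultimately show ?thesis by blast
          next
            case False
            define m' where "m' = l - length As"
            have m': "m' < m" "l = length As + m'" using False l m unfolding m'_def by auto
            define i' where "i' = bs!m'"
            have i': "i' < q" "P i'" "i' < i" using bsP m m' bs(2) sorted_wrt_nth_less
              unfolding i'_def i_def by auto
            have Ll: "L!l = (Fs!i' \<inter> F) \<union> {v}" using LB m m' unfolding i'_def by auto
            have i0: "0 < i" using i' by auto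
            obtain W where W: "Fs!i' \<inter> Fs!i \<subseteq> W" "W \<subseteq> Fs!i" "card W + 1 = card (Fs!i)"
                "\<exists>j<i. W \<subseteq> Fs!j"
              using shell_wall[OF shell i0 _ _ _ i'(3), of "Fs!i' \<inter> Fs!i"] i hK q_def by auto
            obtain x where x: "x \<in> Fs!i" "W = Fs!i - {x}" using wall_form[of "Fs!i" W] W hK i by auto
            have xF: "x \<in> F"
            proof (rule ccontr)
              assume "x \<notin> F"
              then have "x \<in> Fs!i'" using x hK i i' Pchar by blast
              then show False using W x by auto
            qed
            obtain j where j: "j < i" "W \<subseteq> Fs!j" using W by auto
            have jq: "j < q" using j i by auto
            have Pj: "P j" using Pchar[OF jq] Pchar[OF i(1)] i x xF j by blast
            obtain m'' where m'': "m'' < m" "L!(length As + m'') = (Fs!j \<inter> F) \<union> {v}"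
              using Bin[OF m(1) jq Pj] j unfolding i_def by auto
            define Z where "Z = ((Fs!i \<inter> F) - {x}) \<union> {v}"
            have "Z \<subseteq> L!(length As + m'')" using m'' j x unfolding Z_def by auto
            moreover have "length As + m'' < k" using m'' m by simp
            moreover have "Z \<subseteq> L!k" using Lk unfolding Z_def by auto
            ultimately have "Z \<in> (\<Union>i<k. Pow (L ! i)) \<inter> Pow (L ! k)" by blast
            moreover have "Y \<subseteq> Z" using l Ll Lk W x unfolding Z_def by auto
            moreover have "card Z + 1 = card (L!k)" using card_wall_v[OF finI, of x v] Lk vF xF x unfolding Z_def
              by auto
            ultimately show ?thesis by blast
          qed
        qed
      qed
    qed
    have shL: "is_shelling KF L" unfolding is_shelling_def using distL setL facKF pureL by auto
    have Gpart: "\<forall>i<q. Fs ! i \<union> F = {1..n} \<longrightarrow>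
          (\<exists>j<length L. L ! j = (Fs ! i \<inter> F) \<union> {v} \<and> shell_G L j = shell_G Fs i \<inter> F)"
    proof (intro allI impI)
      fix i assume i: "i < q" "Fs ! i \<union> F = {1..n}"
      have Pi: "P i" using i unfolding P_def by auto
      have "i \<in> set bs" using bs(1) Pi i by simp
      then obtain m where m: "m < length bs" "bs!m = i" by (auto simp: in_set_conv_nth)
      define j where "j = length As + m"
      have Lj: "L!j = (Fs!i \<inter> F) \<union> {v}" using LB m unfolding j_def by auto
      have jL: "j < length L" using m lenL lenB unfolding j_def by auto
      have ip: "i < p" using Plt[OF i(1) Pi] .
      obtain x0 where x0: "x0 \<in> R" "Fs!i \<inter> F \<subseteq> F - {x0}" using wallA[OF ip] by (elim bexE) (rule that)
      from Ain[OF x0(1)] obtain l0 where l0: "l0 < length As" "L!l0 = F - {x0}" by (elim exE conjE) (rule that)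
      have j0: "0 < j" using l0(1) unfolding j_def by linarith
      have l0j: "l0 < j" using l0(1) unfolding j_def by linarith
      have finI: "finite (Fs!i \<inter> F)" using finF by auto
      have SGL: "shell_G L j = {y \<in> L!j. \<forall>W. W \<subseteq> L!j \<and> card W + 1 = card (L!j) \<and>
                        (\<exists>l<j. W \<subseteq> L!l) \<longrightarrow> y \<in> W}"
        using j0 by (simp add: shell_G_def)
      have SGF: "i \<noteq> 0 \<Longrightarrow> shell_G Fs i = {y \<in> Fs!i. \<forall>W. W \<subseteq> Fs!i \<and> card W + 1 = card (Fs!i) \<and>
                        (\<exists>l<i. W \<subseteq> Fs!l) \<longrightarrow> y \<in> W}" unfolding shell_G_def by simp
      have g2: "\<And>l. l < j \<Longrightarrow> v \<in> L!l \<Longrightarrow> \<exists>i'. i' < q \<and> P i' \<and> i' < i \<and> L!l = (Fs!i' \<inter> F) \<union> {v}"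
      proof -
        fix l assume l: "l < j" "v \<in> L!l"
        have "\<not> l < length As" using l LA vF by auto
        then have m': "l - length As < m" "l = length As + (l - length As)" using l unfolding j_def by auto
        have ml: "l - length As < length bs" using m'(1) m(1) by linarith
        have "bs!(l - length As) < i" using sorted_wrt_nth_less[OF bs(2) m'(1) m(1)] m(2) by simp
        moreover have "L!l = (Fs!(bs!(l - length As)) \<inter> F) \<union> {v}" using LB[OF ml] m'(2) by simp
        ultimately show "\<exists>i'. i' < q \<and> P i' \<and> i' < i \<and> L!l = (Fs!i' \<inter> F) \<union> {v}"
          using bsP[OF ml] by blast
      qed
      have "shell_G L j = shell_G Fs i \<inter> F"
      proof (rule set_eqI, rule iffI)
        fix y assume y0: "y \<in> shell_G L j"
        have y: "\<forall>W. W \<subseteq> L!j \<and> card W + 1 = card (L!j) \<and> (\<exists>l<j. W \<subseteq> L!l) \<longrightarrow> y \<in> W"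
          using y0 unfolding SGL by simp
        have "Fs!i \<inter> F \<subseteq> L!j" "card (Fs!i \<inter> F) + 1 = card (L!j)" "\<exists>l<j. Fs!i \<inter> F \<subseteq> L!l"
          using Lj finI vF l0 l0j x0 by auto
        then have yI: "y \<in> Fs!i \<inter> F" using y by blast
        show "y \<in> shell_G Fs i \<inter> F"
        proof (cases "i = 0")
          case True
          then show ?thesis using yI unfolding shell_G_def by auto
        next
          case False
          have "\<forall>W. W \<subseteq> Fs!i \<and> card W + 1 = card (Fs!i) \<and> (\<exists>l<i. W \<subseteq> Fs!l) \<longrightarrow> y \<in> W"
          proof (intro allI impI)
            fix W assume W: "W \<subseteq> Fs!i \<and> card W + 1 = card (Fs!i) \<and> (\<exists>l<i. W \<subseteq> Fs!l)"
            obtain x where x: "x \<in> Fs!i" "W = Fs!i - {x}" using wall_form[of "Fs!i" W] W hK i by auto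
            obtain l where l: "l < i" "W \<subseteq> Fs!l" using W by auto
            show "y \<in> W"
            proof (rule ccontr)
              assume "y \<notin> W"
              then have yx: "y = x" using yI x by auto
              then have xF: "x \<in> F" using yI by auto
              have lq: "l < q" using l i by auto
              have Pl: "P l" using Pchar[OF lq] Pchar[OF i(1)] Pi x xF l by blast
              obtain m'' where m'': "m'' < m" "L!(length As + m'') = (Fs!l \<inter> F) \<union> {v}"
                using Bin[OF m(1) lq Pl] l m by auto
              define W' where "W' = ((Fs!i \<inter> F) - {x}) \<union> {v}"
              have "W' \<subseteq> L!j" using Lj unfolding W'_def by auto
              moreover have "card W' + 1 = card (L!j)" using card_wall_v[OF finI, of x v] Lj vF xF x unfolding W'_def
                by auto
              moreover have "\<exists>l<j. W' \<subseteq> L!l"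
                using m'' l x unfolding W'_def j_def by (intro exI[of _ "length As + m''"]) auto
              ultimately have "y \<in> W'" using y by blast
              then show False using yx vF xF unfolding W'_def by auto
            qed
          qed
          then show ?thesis using yI unfolding SGF[OF False] by blast
        qed
      next
        fix y assume y: "y \<in> shell_G Fs i \<inter> F"
        have "shell_G Fs i \<subseteq> Fs!i" unfolding shell_G_def by auto
        then have yI: "y \<in> Fs!i \<inter> F" using y by blast
        have "\<forall>W. W \<subseteq> L!j \<and> card W + 1 = card (L!j) \<and> (\<exists>l<j. W \<subseteq> L!l) \<longrightarrow> y \<in> W"
        proof (intro allI impI)
          fix W assume W: "W \<subseteq> L!j \<and> card W + 1 = card (L!j) \<and> (\<exists>l<j. W \<subseteq> L!l)"
          have finLj: "finite (L!j)" using Lj finI by simp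
          have W1: "W \<subseteq> L!j" "card W + 1 = card (L!j)" using W by blast+
          obtain z where z: "z \<in> L!j" "W = L!j - {z}" using wall_form[OF finLj W1] by blast
          show "y \<in> W"
          proof (cases "z = v")
            case True
            then show ?thesis using z Lj yI vF by auto
          next
            case False
            obtain l where l: "l < j" "W \<subseteq> L!l" using W by auto
            have "v \<in> L!l" using l z False Lj by auto
            from g2[OF l(1) this] obtain i' where i': "i' < q" "P i'" "i' < i" "L!l = (Fs!i' \<inter> F) \<union> {v}"
              by (elim exE conjE) (rule that)
            have zI: "z \<in> Fs!i" "z \<in> F" using z False Lj by auto
            have "Fs!i - {z} \<subseteq> Fs!i'"
            proof
              fix e assume e: "e \<in> Fs!i - {z}"
              show "e \<in> Fs!i'"
              proof (cases "e \<in> F")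
                case True
                then have "e \<in> W" using e z Lj by auto
                then show ?thesis using l i' True vF by auto
              next
                case False
                have "{1..n} - F \<subseteq> Fs!i'" using Pchar[OF i'(1)] i'(2) by blast
                moreover have "Fs!i \<subseteq> {1..n}" using hK[OF i(1)] by blast
                ultimately show ?thesis using e False by blast
              qed
            qed
            moreover have "card (Fs!i - {z}) + 1 = card (Fs!i)"
            proof -
              have fi: "finite (Fs!i)" using hK i by blast
              have "card (Fs!i) > 0" using fi zI card_gt_0_iff by blast
              then show ?thesis using card_Diff_singleton[OF zI(1)] by linarith
            qed
            moreover have "i \<noteq> 0" using i' by auto
            moreover have "y \<in> shell_G Fs i" using y by blast
            ultimately have "y \<in> Fs!i - {z}"
            proof -
              assume a1: "Fs!i - {z} \<subseteq> Fs!i'" and a2: "card (Fs!i - {z}) + 1 = card (Fs!i)"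
                and a3: "i \<noteq> 0" and a4: "y \<in> shell_G Fs i"
              have yall: "\<forall>W. W \<subseteq> Fs!i \<and> card W + 1 = card (Fs!i) \<and> (\<exists>l<i. W \<subseteq> Fs!l) \<longrightarrow> y \<in> W"
                using a4 unfolding SGF[OF a3] by simp
              have "\<exists>l<i. Fs!i - {z} \<subseteq> Fs!l" using a1 i'(3) by blast
              moreover have "Fs!i - {z} \<subseteq> Fs!i" by blast
              ultimately show ?thesis using yall a2 by blast
            qed
            then show ?thesis using z yI Lj by auto
          qed
        qed
        then show "y \<in> shell_G L j" unfolding SGL using yI Lj by blast
      qed
      then show "\<exists>j<length L. L ! j = (Fs ! i \<inter> F) \<union> {v} \<and> shell_G L j = shell_G Fs i \<inter> F"
        using jL Lj by blast
    qed
    show ?thesis using cplxKF shL Gpart unfolding shellable_def by blast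
  qed
qed

end
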